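(* Let $\mathcal{L}$ be the set of loss functions that are both mixable and proper, and let $E$ be the set of tuples $(\gamma^1,\dots,\gamma^N,\eta^1,\dots,\eta^N,\lambda^1,\dots,\lambda^N)\in[0,1]^N\times(0,\infty)^N\times\mathcal{L}^N$ such that $\lambda^n$ is $\eta^n$-mixable for all $n=1,\dots,N$. Fix $n\in\{1,\dots,N\}$ and define $Q^n:(E\times[0,1]\times\{0,1\})^*\to[0,\infty]$ by $$Q^n(e_1,\pi_1,\omega_1,\dots,e_T,\pi_T,\omega_T):=\prod_{t=1}^T\exp\Bigl(\eta_t^n\bigl(\lambda_t^n(\pi_t,\omega_t)-\lambda_t^n(\gamma_t^n,\omega_t)\bigr)\Bigr),$$ where $e_t=(\gamma_t^1,\dots,\gamma_t^N,\eta_t^1,\dots,\eta_t^N,\lambda_t^1,\dots,\lambda_t^N)$ and the empty product equals $1$. Then $Q^n$ is a supermartingale.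
   Context: A loss function is a map $\lambda:[0,1]\times\{0,1\}\to[0,\infty]$ satisfying: (1) $\lambda(\gamma,0)$, $\lambda(\gamma,1)$ continuous in $\gamma\in[0,1]$ (standard topology on $[0,\infty]$); (2) some $\gamma$ has both values finite; (3) no $\gamma$ has both values infinite. Superprediction set: $\Sigma_\lambda=\{(x,y)\in[0,\infty)^2:\exists\gamma\ \lambda(\gamma,0)\le x,\ \lambda(\gamma,1)\le y\}$. $\lambda$ is $\eta$-mixable ($\eta>0$) if $\{(e^{-\eta x},e^{-\eta y}):(x,y)\in\Sigma_\lambda\}$ is convex; mixable if $\eta$-mixable for some $\eta>0$; proper if $\pi\lambda(\pi,1)+(1-\pi)\lambda(\pi,0)\le\pi\lambda(\pi',1)+(1-\pi)\lambda(\pi',0)$ for all $\pi,\pi'\in[0,1]$. A function $S:(E\times[0,1]\times\{0,1\})^*\to(-\infty,\infty]$ is a supermartingale if for any $T$, any $e_1,\dots,e_T\in E$, any $\pi_1,\dots,\pi_T\in[0,1]$ and any $\omega_1,\dots,\omega_{T-1}\in\{0,1\}$: $\pi_T S(e_1,\pi_1,\omega_1,\dots,e_T,\pi_T,1)+(1-\pi_T)S(e_1,\pi_1,\omega_1,\dots,e_T,\pi_T,0)\le S(e_1,\pi_1,\omega_1,\dots,e_{T-1},\pi_{T-1},\omega_{T-1})$. *)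

theory Defs
  imports "HOL-Analysis.Analysis" "HOL-Library.Extended_Nonnegative_Real" "HOL-Library.FuncSet"
begin

type_synonym loss = "real \<Rightarrow> bool \<Rightarrow> ennreal"
  (* \<lambda> \<gamma> \<omega>, with \<omega> = True encoding outcome 1, False encoding outcome 0;
     only the values for \<gamma> \<in> [0,1] matter *)

definition loss_function :: "loss \<Rightarrow> bool" where
  "loss_function l \<longleftrightarrow>
     continuous_on {0..1} (\<lambda>\<gamma>. l \<gamma> False) \<and>
     continuous_on {0..1} (\<lambda>\<gamma>. l \<gamma> True) \<and>
     (\<exists>\<gamma>\<in>{0..1}. l \<gamma> False < \<infinity> \<and> l \<gamma> True < \<infinity>) \<and>
     (\<forall>\<gamma>\<in>{0..1}. \<not> (l \<gamma> False = \<infinity> \<and> l \<gamma> True = \<infinity>))"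

definition superprediction :: "loss \<Rightarrow> (real \<times> real) set" where
  "superprediction l = {(x, y). 0 \<le> x \<and> 0 \<le> y \<and>
      (\<exists>\<gamma>\<in>{0..1}. l \<gamma> False \<le> ennreal x \<and> l \<gamma> True \<le> ennreal y)}"

definition eta_mixable :: "real \<Rightarrow> loss \<Rightarrow> bool" where
  "eta_mixable \<eta> l \<longleftrightarrow> 0 < \<eta> \<and>
     convex ((\<lambda>(x, y). (exp (- \<eta> * x), exp (- \<eta> * y))) ` superprediction l)"

definition mixable :: "loss \<Rightarrow> bool" where
  "mixable l \<longleftrightarrow> (\<exists>\<eta>>0. eta_mixable \<eta> l)"

definition proper :: "loss \<Rightarrow> bool" where
  "proper l \<longleftrightarrow> (\<forall>\<pi>\<in>{0..1}. \<forall>\<pi>'\<in>{0..1}.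
     ennreal \<pi> * l \<pi> True + ennreal (1 - \<pi>) * l \<pi> False
       \<le> ennreal \<pi> * l \<pi>' True + ennreal (1 - \<pi>) * l \<pi>' False)"

definition Lset :: "loss set" where
  "Lset = {l. loss_function l \<and> mixable l \<and> proper l}"

(* an element e = (\<gamma>^1..\<gamma>^N, \<eta>^1..\<eta>^N, \<lambda>^1..\<lambda>^N), components indexed by {1..N} *)
type_synonym expert = "(nat \<Rightarrow> real) \<times> (nat \<Rightarrow> real) \<times> (nat \<Rightarrow> loss)"

definition Eset :: "nat \<Rightarrow> expert set" where
  "Eset N = {(g, h, l). g \<in> {1..N} \<rightarrow>\<^sub>E {0..1} \<and> h \<in> {1..N} \<rightarrow>\<^sub>E {0<..} \<and>
       l \<in> {1..N} \<rightarrow>\<^sub>E Lset \<and> (\<forall>k\<in>{1..N}. eta_mixable (h k) (l k))}"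

(* exp(\<eta>(a - b)) in [0,\<infinity>] for a, b \<in> [0,\<infinity>], with exp(\<infinity>) = \<infinity>, exp(-\<infinity>) = 0
   and the convention \<infinity> - \<infinity> = 0 *)
definition exp_diff :: "real \<Rightarrow> ennreal \<Rightarrow> ennreal \<Rightarrow> ennreal" where
  "exp_diff \<eta> a b =
     (if a = \<infinity> \<and> b = \<infinity> then 1
      else if a = \<infinity> then \<infinity>
      else if b = \<infinity> then 0
      else ennreal (exp (\<eta> * (enn2real a - enn2real b))))"

definition Q :: "nat \<Rightarrow> (expert \<times> real \<times> bool) list \<Rightarrow> ennreal" where
  "Q n xs = prod_list (map (\<lambda>((g, h, l), p, w). exp_diff (h n) (l n p w) (l n (g n) w)) xs)"

definition supermartingale :: "'e set \<Rightarrow> (('e \<times> real \<times> bool) list \<Rightarrow> ereal) \<Rightarrow> bool" where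
  "supermartingale E S \<longleftrightarrow>
     (\<forall>xs e p. (\<forall>(e', p', w)\<in>set xs. e' \<in> E \<and> p' \<in> {0..1}) \<longrightarrow> e \<in> E \<longrightarrow> p \<in> {0..1} \<longrightarrow>
        ereal p * S (xs @ [(e, p, True)]) + ereal (1 - p) * S (xs @ [(e, p, False)]) \<le> S xs)"

end

theory Submission imports Defs begin

lemma key_conv:
  fixes C :: "(real \<times> real) set"
  assumes cv: "convex C" and uC: "(u0,u1) \<in> C" and u0: "u0 > 0" and u1: "u1 > 0"
    and p0: "0 \<le> p" and p1: "p \<le> 1"
    and opt: "\<And>w0 w1. (w0,w1) \<in> C \<Longrightarrow> w0 > 0 \<Longrightarrow> w1 > 0 \<Longrightarrow>
                (1-p)*ln w0 + p*ln w1 \<le> (1-p)*ln u0 + p*ln u1"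
    and vC: "(v0,v1) \<in> C" and v0: "v0 > 0" and v1: "v1 > 0"
  shows "(1-p)*(v0/u0) + p*(v1/u1) \<le> 1"
proof (rule ccontr)
  assume neg: "\<not> ?thesis"
  define D where "D = (1-p)*((v0-u0)/u0) + p*((v1-u1)/u1)"
  have Dpos: "D > 0" using neg u0 u1 unfolding D_def by (simp add: field_simps)
  define g where "g t = (1-p)*ln (u0 + t * (v0-u0)) + p*ln (u1 + t * (v1-u1))" for t :: real
  have "DERIV g 0 :> (1-p)*((v0-u0)/(u0 + 0*(v0-u0))) + p*((v1-u1)/(u1+0*(v1-u1)))"
    unfolding g_def using u0 u1
    by (auto intro!: derivative_eq_intros simp: field_simps)
  then have der: "DERIV g 0 :> D" by (simp add: D_def)
  from DERIV_pos_inc_right[OF der Dpos] obtain d where d: "d > 0" "\<And>h. h > 0 \<Longrightarrow> h < d \<Longrightarrow> g 0 < g (0 + h)"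
    by blast
  define h where "h = min (d/2) 1"
  have h: "h > 0" "h < d" "h \<le> 1" using d by (auto simp: h_def)
  have lt: "g 0 < g h" using d(2)[OF h(1,2)] by simp
  have "(1-h) *\<^sub>R (u0,u1) + h *\<^sub>R (v0,v1) \<in> C"
    using convexD[OF cv uC vC, of "1-h" h] h by simp
  moreover have "(1-h) *\<^sub>R (u0,u1) + h *\<^sub>R (v0,v1) = (u0 + h*(v0-u0), u1 + h*(v1-u1))"
    by (simp; simp add: algebra_simps)
  ultimately have wC: "(u0 + h*(v0-u0), u1 + h*(v1-u1)) \<in> C" by simp
  have pos0: "u0 + h*(v0-u0) > 0"
  proof -
    have "u0 + h*(v0-u0) = (1-h)*u0 + h * v0" by (simp add: algebra_simps)
    moreover have "(1-h)*u0 \<ge> 0" using h u0 by simp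
    moreover have "h * v0 > 0" using h v0 by simp
    ultimately show ?thesis by linarith
  qed
  have pos1: "u1 + h*(v1-u1) > 0"
  proof -
    have "u1 + h*(v1-u1) = (1-h)*u1 + h * v1" by (simp add: algebra_simps)
    moreover have "(1-h)*u1 \<ge> 0" using h u1 by simp
    moreover have "h * v1 > 0" using h v1 by simp
    ultimately show ?thesis by linarith
  qed
  have "g h \<le> g 0" using opt[OF wC pos0 pos1] by (simp add: g_def)
  with lt show False by simp
qed

lemma fin_interior:
  assumes "l \<in> Lset" "0 < x" "x < 1"
  shows "l x True \<noteq> \<infinity> \<and> l x False \<noteq> \<infinity>"
proof -
  from assms(1) obtain y where y: "y \<in> {0..1}" "l y False < \<infinity>" "l y True < \<infinity>"
    by (auto simp: Lset_def loss_function_def)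
  have pr: "ennreal x * l x True + ennreal (1 - x) * l x False
       \<le> ennreal x * l y True + ennreal (1 - x) * l y False"
    using assms y by (auto simp: Lset_def proper_def)
  have "ennreal x * l y True + ennreal (1 - x) * l y False < \<infinity>"
    using y by (simp add: ennreal_mult_less_top)
  from le_less_trans[OF pr this] have "ennreal x * l x True + ennreal (1 - x) * l x False < \<infinity>" .
  then have a: "ennreal x * l x True < \<infinity>" "ennreal (1 - x) * l x False < \<infinity>"
    by (simp_all add: ennreal_add_less_top)
  have "ennreal x \<noteq> 0" "ennreal (1-x) \<noteq> 0" using assms(2,3) by simp_all
  then show ?thesis using a unfolding ennreal_mult_less_top by auto
qed

lemma mix_bound:
  assumes L: "l \<in> Lset" and mix: "eta_mixable \<eta> l" and p: "0 \<le> p" "p \<le> 1"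
    and fp: "l p True \<noteq> \<infinity>" "l p False \<noteq> \<infinity>" and g: "0 \<le> g" "g \<le> 1"
    and fg: "l g True \<noteq> \<infinity>" "l g False \<noteq> \<infinity>"
  shows "p * exp (\<eta> * (enn2real (l p True) - enn2real (l g True)))
       + (1-p) * exp (\<eta> * (enn2real (l p False) - enn2real (l g False))) \<le> 1"
proof -
  define P0 P1 G0 G1 where "P0 = enn2real (l p False)" "P1 = enn2real (l p True)"
    "G0 = enn2real (l g False)" "G1 = enn2real (l g True)"
  have eP: "l p False = ennreal P0" "l p True = ennreal P1" "l g False = ennreal G0" "l g True = ennreal G1"
    using fp fg by (auto simp: P0_P1_G0_G1_def ennreal_enn2real_if)
  have nn: "P0 \<ge> 0" "P1 \<ge> 0" "G0 \<ge> 0" "G1 \<ge> 0" by (auto simp: P0_P1_G0_G1_def)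
  have eta: "\<eta> > 0" and cv: "convex ((\<lambda>(x, y). (exp (- \<eta> * x), exp (- \<eta> * y))) ` superprediction l)"
    using mix by (auto simp: eta_mixable_def)
  define C where "C = (\<lambda>(x, y). (exp (- \<eta> * x), exp (- \<eta> * y))) ` superprediction l"
  have "(P0, P1) \<in> superprediction l" using nn p eP by (auto simp: superprediction_def intro!: bexI[of _ p])
  then have uC: "(exp (- \<eta> * P0), exp (- \<eta> * P1)) \<in> C" unfolding C_def by (rule rev_image_eqI) simp
  have "(G0, G1) \<in> superprediction l" using nn g eP by (auto simp: superprediction_def intro!: bexI[of _ g])
  then have vC: "(exp (- \<eta> * G0), exp (- \<eta> * G1)) \<in> C" unfolding C_def by (rule rev_image_eqI) simp
  have opt: "(1-p)*ln w0 + p*ln w1 \<le> (1-p)*ln (exp (- \<eta> * P0)) + p*ln (exp (- \<eta> * P1))"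
    if w: "(w0,w1) \<in> C" for w0 w1
  proof -
    from w obtain x y where xy: "(x,y) \<in> superprediction l" "w0 = exp (- \<eta> * x)" "w1 = exp (- \<eta> * y)"
      unfolding C_def by auto
    then obtain g' where g': "g' \<in> {0..1}" "l g' False \<le> ennreal x" "l g' True \<le> ennreal y" "0 \<le> x" "0 \<le> y"
      by (auto simp: superprediction_def)
    have "ennreal p * l p True + ennreal (1 - p) * l p False
       \<le> ennreal p * l g' True + ennreal (1 - p) * l g' False"
      using L p g' by (auto simp: Lset_def proper_def)
    also have "\<dots> \<le> ennreal p * ennreal y + ennreal (1 - p) * ennreal x"
      using g' by (intro add_mono mult_left_mono) auto
    finally have le: "ennreal p * ennreal P1 + ennreal (1 - p) * ennreal P0 \<le> ennreal p * ennreal y + ennreal (1 - p) * ennreal x"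
      by (simp only: eP)
    have e1: "ennreal p * ennreal P1 + ennreal (1 - p) * ennreal P0 = ennreal (p * P1 + (1-p) * P0)"
      using p nn by (simp add: ennreal_mult' ennreal_plus)
    have e2: "ennreal p * ennreal y + ennreal (1 - p) * ennreal x = ennreal (p * y + (1-p) * x)"
      using p g' by (simp add: ennreal_mult' ennreal_plus)
    have "ennreal (p * P1 + (1-p) * P0) \<le> ennreal (p * y + (1-p) * x)"
      using le unfolding e1 e2 .
    then have "p * P1 + (1-p) * P0 \<le> p * y + (1-p) * x"
      using p g' ennreal_le_iff[of "p * y + (1-p) * x" "p * P1 + (1-p) * P0"] by simp
    then have "\<eta> * (p * P1 + (1-p) * P0) \<le> \<eta> * (p * y + (1-p) * x)"
      using eta by (simp add: mult_left_mono)
    then show ?thesis using xy by (simp add: algebra_simps)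
  qed
  have "(1-p)*(exp (- \<eta> * G0)/exp (- \<eta> * P0)) + p*(exp (- \<eta> * G1)/exp (- \<eta> * P1)) \<le> 1"
    by (rule key_conv[OF cv[folded C_def] uC _ _ p opt vC]) auto
  moreover have "exp (- \<eta> * G0)/exp (- \<eta> * P0) = exp (\<eta> * (P0 - G0))"
    "exp (- \<eta> * G1)/exp (- \<eta> * P1) = exp (\<eta> * (P1 - G1))"
    by (simp_all add: exp_diff[symmetric] algebra_simps)
  ultimately have "(1-p)*exp (\<eta> * (P0 - G0)) + p*exp (\<eta> * (P1 - G1)) \<le> 1" by (simp only:)
  then show ?thesis unfolding P0_P1_G0_G1_def by linarith
qed

lemma mix_bound_one:
  assumes L: "l \<in> Lset" and mix: "eta_mixable \<eta> l" and p: "0 \<le> p" "p \<le> 1"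
    and fp: "l p True \<noteq> \<infinity>" "l p False \<noteq> \<infinity>" and g: "0 \<le> g" "g \<le> 1"
    and fg: "l g w \<noteq> \<infinity>"
  shows "(if w then p else 1-p) * exp (\<eta> * (enn2real (l p w) - enn2real (l g w))) \<le> 1"
proof -
  define s where "s k = inverse (real (Suc k))" for k
  define gk where "gk k = (1 - s k) * g + s k / 2" for k
  have s01: "0 < s k" "s k \<le> 1" for k by (auto simp: s_def field_simps)
  have gk01: "0 < gk k" "gk k < 1" for k
  proof -
    have "(1 - s k) * g \<ge> 0" "(1 - s k) * g \<le> 1 - s k" using s01[of k] g by (auto intro: mult_left_le)
    then show "0 < gk k" "gk k < 1" using s01[of k] unfolding gk_def by linarith+
  qed
  have bnd: "(if w then p else 1-p) * exp (\<eta> * (enn2real (l p w) - enn2real (l (gk k) w))) \<le> 1" for k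
  proof -
    have fk: "l (gk k) True \<noteq> \<infinity>" "l (gk k) False \<noteq> \<infinity>" using fin_interior[OF L gk01] by auto
    have mb: "p * exp (\<eta> * (enn2real (l p True) - enn2real (l (gk k) True)))
       + (1-p) * exp (\<eta> * (enn2real (l p False) - enn2real (l (gk k) False))) \<le> 1"
      using mix_bound[OF L mix p fp _ _ fk] gk01[of k] by simp
    have "p * exp (\<eta> * (enn2real (l p True) - enn2real (l (gk k) True))) \<ge> 0"
      "(1-p) * exp (\<eta> * (enn2real (l p False) - enn2real (l (gk k) False))) \<ge> 0" using p by simp_all
    then show ?thesis using mb by (cases w) auto
  qed
  have "s \<longlonglongrightarrow> 0" unfolding s_def by (rule LIMSEQ_inverse_real_of_nat)
  then have "gk \<longlonglongrightarrow> (1 - 0) * g + 0 / 2" unfolding gk_def by (intro tendsto_intros) simp_all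
  then have gkl: "gk \<longlonglongrightarrow> g" by simp
  have cont: "continuous_on {0..1} (\<lambda>x. l x w)"
    using L by (cases w) (auto simp: Lset_def loss_function_def)
  have "(\<lambda>k. l (gk k) w) \<longlonglongrightarrow> l g w"
    by (rule continuous_on_tendsto_compose[OF cont gkl]) (use g gk01 less_imp_le in \<open>auto intro!: always_eventually\<close>)
  then have "(\<lambda>k. l (gk k) w) \<longlonglongrightarrow> ennreal (enn2real (l g w))"
    using fg by (simp add: ennreal_enn2real_if)
  then have "(\<lambda>k. enn2real (l (gk k) w)) \<longlonglongrightarrow> enn2real (l g w)"
    by (rule tendsto_enn2real) simp
  note lim = this
  have "(\<lambda>k. (if w then p else 1-p) * exp (\<eta> * (enn2real (l p w) - enn2real (l (gk k) w))))
     \<longlonglongrightarrow> (if w then p else 1-p) * exp (\<eta> * (enn2real (l p w) - enn2real (l g w)))"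
    by (rule tendsto_mult[OF tendsto_const tendsto_exp[OF tendsto_mult[OF tendsto_const tendsto_diff[OF tendsto_const lim]]]])
  then show ?thesis by (rule LIMSEQ_le_const2) (use bnd in auto)
qed

lemma exp_diff_le1:
  assumes "0 < \<eta>" "a \<le> b"
  shows "exp_diff \<eta> a b \<le> 1"
proof -
  consider "b = \<infinity>" | "a \<noteq> \<infinity>" "b \<noteq> \<infinity>" using assms(2) by (metis infinity_ennreal_def top.extremum_unique)
  then show ?thesis
  proof cases
    case 1 then show ?thesis by (auto simp: exp_diff_def)
  next
    case 2
    then have "enn2real a \<le> enn2real b" using assms(2) by (intro enn2real_mono) (auto simp: top.not_eq_extremum)
    then have "exp (\<eta> * (enn2real a - enn2real b)) \<le> 1" using assms(1)
      by (simp add: mult_nonneg_nonpos)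
    then show ?thesis using 2 by (simp add: exp_diff_def)
  qed
qed

lemma step_bound:
  assumes L: "l \<in> Lset" and mix: "eta_mixable \<eta> l" and p: "0 \<le> p" "p \<le> 1" and g: "0 \<le> g" "g \<le> 1"
  shows "ennreal p * exp_diff \<eta> (l p True) (l g True) + ennreal (1-p) * exp_diff \<eta> (l p False) (l g False) \<le> 1"
proof -
  have eta: "\<eta> > 0" using mix by (simp add: eta_mixable_def)
  have pr: "ennreal p * l p True + ennreal (1 - p) * l p False
       \<le> ennreal p * l g True + ennreal (1 - p) * l g False"
    using L p g by (auto simp: Lset_def proper_def)
  consider "p = 0" | "p = 1" | "0 < p" "p < 1" using p by linarith
  then show ?thesis
  proof cases
    case 1
    then have "l p False \<le> l g False" using pr by simp
    then show ?thesis using 1 exp_diff_le1[OF eta] by simp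
  next
    case 2
    then have "l p True \<le> l g True" using pr by simp
    then show ?thesis using 2 exp_diff_le1[OF eta] by simp
  next
    case 3
    have fp: "l p True \<noteq> \<infinity>" "l p False \<noteq> \<infinity>" using fin_interior[OF L 3] by auto
    have nb: "\<not> (l g False = \<infinity> \<and> l g True = \<infinity>)" using L g by (auto simp: Lset_def loss_function_def)
    consider "l g True \<noteq> \<infinity>" "l g False \<noteq> \<infinity>" | "l g True = \<infinity>" "l g False \<noteq> \<infinity>"
      | "l g True \<noteq> \<infinity>" "l g False = \<infinity>" using nb by blast
    then show ?thesis
    proof cases
      case 1
      note mb = mix_bound[OF L mix p fp g 1(1,2)]
      have "ennreal p * exp_diff \<eta> (l p True) (l g True) + ennreal (1-p) * exp_diff \<eta> (l p False) (l g False)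
        = ennreal (p * exp (\<eta> * (enn2real (l p True) - enn2real (l g True)))
       + (1-p) * exp (\<eta> * (enn2real (l p False) - enn2real (l g False))))"
        using 1 fp p by (simp add: exp_diff_def ennreal_mult' ennreal_plus)
      also have "\<dots> \<le> 1" using mb by (simp add: ennreal_le_1)
      finally show ?thesis .
    next
      case 2
      have mb: "(1-p) * exp (\<eta> * (enn2real (l p False) - enn2real (l g False))) \<le> 1"
        using mix_bound_one[OF L mix p fp g, of False] 2 by simp
      have "ennreal p * exp_diff \<eta> (l p True) (l g True) + ennreal (1-p) * exp_diff \<eta> (l p False) (l g False)
        = ennreal ((1-p) * exp (\<eta> * (enn2real (l p False) - enn2real (l g False))))"
        using 2 fp p by (simp add: exp_diff_def ennreal_mult')
      also have "\<dots> \<le> 1" using mb by (simp add: ennreal_le_1)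
      finally show ?thesis .
    next
      case 3
      have mb: "p * exp (\<eta> * (enn2real (l p True) - enn2real (l g True))) \<le> 1"
        using mix_bound_one[OF L mix p fp g, of True] 3 by simp
      have "ennreal p * exp_diff \<eta> (l p True) (l g True) + ennreal (1-p) * exp_diff \<eta> (l p False) (l g False)
        = ennreal (p * exp (\<eta> * (enn2real (l p True) - enn2real (l g True))))"
        using 3 fp p by (simp add: exp_diff_def ennreal_mult')
      also have "\<dots> \<le> 1" using mb by (simp add: ennreal_le_1)
      finally show ?thesis .
    qed
  qed
qed

lemma Q_snoc: "Q n (xs @ [((g, h, l), p, w)]) = Q n xs * exp_diff (h n) (l n p w) (l n (g n) w)"
  by (simp add: Q_def)

theorem lemma3:
  fixes N n :: nat
  assumes "1 \<le> n" and "n \<le> N"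
  shows "supermartingale (Eset N) (\<lambda>xs. enn2ereal (Q n xs))"
  unfolding supermartingale_def
proof (intro allI impI)
  fix xs and e :: expert and p :: real
  assume "e \<in> Eset N" and p: "p \<in> {0..1}"
  obtain g h l where e: "e = (g, h, l)" by (cases e)
  have nN: "n \<in> {1..N}" using assms by simp
  have L: "l n \<in> Lset" and mix: "eta_mixable (h n) (l n)" and g: "g n \<in> {0..1}"
    using \<open>e \<in> Eset N\<close> nN unfolding e Eset_def by (auto simp: PiE_def Pi_def)
  define A where "A = exp_diff (h n) (l n p True) (l n (g n) True)"
  define B where "B = exp_diff (h n) (l n p False) (l n (g n) False)"
  have sb: "ennreal p * A + ennreal (1-p) * B \<le> 1"
    unfolding A_def B_def using step_bound[OF L mix] p g by auto
  have "ereal p * enn2ereal (Q n (xs @ [(e, p, True)])) + ereal (1 - p) * enn2ereal (Q n (xs @ [(e, p, False)]))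
      = enn2ereal (Q n xs * (ennreal p * A + ennreal (1-p) * B))"
    using p by (simp add: e Q_snoc A_def B_def times_ennreal.rep_eq plus_ennreal.rep_eq algebra_simps)
  also have "\<dots> \<le> enn2ereal (Q n xs * 1)"
    using sb by (simp only: less_eq_ennreal.rep_eq[symmetric]) (rule mult_left_mono, auto)
  finally show "ereal p * enn2ereal (Q n (xs @ [(e, p, True)])) + ereal (1 - p) * enn2ereal (Q n (xs @ [(e, p, False)]))
      \<le> enn2ereal (Q n xs)" by simp
qed

end
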